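(* Let $\mathcal{H}=(\mathcal{V},\mathcal{E})$ be a connected hypergraph and let $B(\mathcal{H})$ be its set of bridges. If $B(\mathcal{H})$ is a proper subset of $\mathcal{E}$ and the spanning sub-hypergraph $(\mathcal{V},B(\mathcal{H}))$ is connected, then $\lambda^2$ divides $P(\mathcal{H},\lambda)$.
   Context: A hypergraph $\mathcal{H}=(\mathcal{V},\mathcal{E})$ consists of a finite vertex set $\mathcal{V}$ and a set $\mathcal{E}$ of subsets of $\mathcal{V}$, each of size at least $1$, called edges. For a positive integer $\lambda$, a weak proper $\lambda$-colouring of $\mathcal{H}$ is a map $\phi:\mathcal{V}\to\{1,\dots,\lambda\}$ such that $|\{\phi(v):v\in e\}|>1$ for every $e\in\mathcal{E}$. $P(\mathcal{H},\lambda)$ denotes the number of weak proper $\lambda$-colourings of $\mathcal{H}$; it is a polynomial in $\lambda$. $\mathcal{H}$ is connected if for any two vertices $v_1,v_2$ there is a sequence of edges $e_0,\dots,e_k$ with $v_1\in e_0$, $v_2\in e_k$ and $e_i\cap e_{i+1}\neq\emptyset$ for all $i$. An edge $e$ of a connected hypergraph is a bridge if $\mathcal{H}-e$ (obtained by removing the edge $e$, keeping all vertices) is disconnected. *)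

theory Defs
  imports "HOL-Library.FuncSet" "HOL-Computational_Algebra.Polynomial"
begin

definition hypergraph :: "'a set \<Rightarrow> 'a set set \<Rightarrow> bool" where
  "hypergraph V E \<longleftrightarrow> finite V \<and> (\<forall>e\<in>E. e \<subseteq> V \<and> e \<noteq> {})"

definition hconnected :: "'a set \<Rightarrow> 'a set set \<Rightarrow> bool" where
  "hconnected V E \<longleftrightarrow>
     (\<forall>v1\<in>V. \<forall>v2\<in>V. \<exists>es. es \<noteq> [] \<and> set es \<subseteq> E \<and> v1 \<in> hd es \<and> v2 \<in> last es \<and>
        (\<forall>i. Suc i < length es \<longrightarrow> es ! i \<inter> es ! Suc i \<noteq> {}))"

definition bridges :: "'a set \<Rightarrow> 'a set set \<Rightarrow> 'a set set" where
  "bridges V E = {e \<in> E. \<not> hconnected V (E - {e})}"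

definition weak_colourings :: "'a set \<Rightarrow> 'a set set \<Rightarrow> nat \<Rightarrow> ('a \<Rightarrow> nat) set" where
  "weak_colourings V E n = {\<phi> \<in> V \<rightarrow>\<^sub>E {1..n}. \<forall>e\<in>E. card (\<phi> ` e) > 1}"

definition num_colourings :: "'a set \<Rightarrow> 'a set set \<Rightarrow> nat \<Rightarrow> nat" where
  "num_colourings V E n = card (weak_colourings V E n)"

definition chrom_poly :: "'a set \<Rightarrow> 'a set set \<Rightarrow> int poly" where
  "chrom_poly V E = (THE p. \<forall>n\<ge>1. poly p (int n) = int (num_colourings V E n))"

end

theory Submission
  imports Defs
begin

lemma incl_excl:
  fixes A :: "'i \<Rightarrow> 'b set"
  assumes "finite I"
  shows "finite U \<Longrightarrow> int (card (U - (\<Union>i\<in>I. A i))) =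
     (\<Sum>S\<in>Pow I. (-1)^card S * int (card (U \<inter> (\<Inter>i\<in>S. A i))))"
  using assms
proof (induction I arbitrary: U rule: finite_induct)
  case empty
  then show ?case by simp
next
  case (insert a F)
  have fS: "\<And>S. S \<in> Pow F \<Longrightarrow> finite S" using insert(1) finite_subset by auto
  have eq1: "U - (\<Union>i\<in>insert a F. A i) = (U - (\<Union>i\<in>F. A i)) - ((U - (\<Union>i\<in>F. A i)) \<inter> A a)" by blast
  have eq2: "(U - (\<Union>i\<in>F. A i)) \<inter> A a = (U \<inter> A a) - (\<Union>i\<in>F. A i)" by blast
  have "int (card (U - (\<Union>i\<in>insert a F. A i))) = int (card (U - (\<Union>i\<in>F. A i))) - int (card ((U \<inter> A a) - (\<Union>i\<in>F. A i)))"
  proof -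
    have f: "finite (U - (\<Union>i\<in>F. A i))" using insert.prems by simp
    have "card (U - (\<Union>i\<in>insert a F. A i)) = card (U - (\<Union>i\<in>F. A i)) - card ((U - (\<Union>i\<in>F. A i)) \<inter> A a)"
      unfolding eq1 by (rule card_Diff_subset) (use f in auto)
    moreover have "card ((U - (\<Union>i\<in>F. A i)) \<inter> A a) \<le> card (U - (\<Union>i\<in>F. A i))"
      by (rule card_mono[OF f]) blast
    ultimately show ?thesis unfolding eq2 by simp
  qed
  also have "\<dots> = (\<Sum>S\<in>Pow F. (-1)^card S * int (card (U \<inter> (\<Inter>i\<in>S. A i))))
      - (\<Sum>S\<in>Pow F. (-1)^card S * int (card ((U \<inter> A a) \<inter> (\<Inter>i\<in>S. A i))))"
    using insert.IH insert.prems by simp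
  also have "\<dots> = (\<Sum>S\<in>Pow F. (-1)^card S * int (card (U \<inter> (\<Inter>i\<in>S. A i))))
      + (\<Sum>S\<in>insert a ` Pow F. (-1)^card S * int (card (U \<inter> (\<Inter>i\<in>S. A i))))"
  proof -
    have inj: "inj_on (insert a) (Pow F)" using insert(2) by (auto simp: inj_on_def)
    have "(\<Sum>S\<in>insert a ` Pow F. (-1)^card S * int (card (U \<inter> (\<Inter>i\<in>S. A i))))
       = (\<Sum>S\<in>Pow F. (-1)^card (insert a S) * int (card (U \<inter> (\<Inter>i\<in>insert a S. A i))))"
      by (simp add: sum.reindex[OF inj])
    also have "\<dots> = - (\<Sum>S\<in>Pow F. (-1)^card S * int (card ((U \<inter> A a) \<inter> (\<Inter>i\<in>S. A i))))"
      unfolding sum_negf[symmetric]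
    proof (rule sum.cong)
      fix S assume S: "S \<in> Pow F"
      then have "a \<notin> S" using insert(2) by auto
      then show "(-1)^card (insert a S) * int (card (U \<inter> (\<Inter>i\<in>insert a S. A i))) =
         - ((-1)^card S * int (card ((U \<inter> A a) \<inter> (\<Inter>i\<in>S. A i))))"
        using fS[OF S] by (simp add: Int_assoc)
    qed simp
    finally show ?thesis by simp
  qed
  also have "\<dots> = (\<Sum>S\<in>Pow (insert a F). (-1)^card S * int (card (U \<inter> (\<Inter>i\<in>S. A i))))"
    unfolding Pow_insert
    by (rule sum.union_disjoint[symmetric]) (use insert(1,2) in auto)
  finally show ?case .
qed


definition R0 :: "'a set set \<Rightarrow> ('a \<times> 'a) set" where
  "R0 S = {(u,v). \<exists>e\<in>S. u \<in> e \<and> v \<in> e}"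

lemma list_trancl:
  "es \<noteq> [] \<Longrightarrow> set es \<subseteq> S \<Longrightarrow> v1 \<in> hd es \<Longrightarrow> v2 \<in> last es \<Longrightarrow>
   (\<forall>i. Suc i < length es \<longrightarrow> es ! i \<inter> es ! Suc i \<noteq> {}) \<Longrightarrow> (v1,v2) \<in> (R0 S)\<^sup>+"
proof (induction es arbitrary: v1)
  case Nil then show ?case by simp
next
  case (Cons e es)
  show ?case
  proof (cases es)
    case Nil
    then show ?thesis using Cons.prems by (auto simp: R0_def)
  next
    case (Cons e' es')
    from Cons.prems(5)[rule_format, of 0] obtain w where w: "w \<in> e" "w \<in> e'"
      using \<open>es = e' # es'\<close> by auto
    have "(w, v2) \<in> (R0 S)\<^sup>+"
    proof (rule Cons.IH)
      show "\<forall>i. Suc i < length es \<longrightarrow> es ! i \<inter> es ! Suc i \<noteq> {}"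
      proof (intro allI impI)
        fix i assume "Suc i < length es"
        then show "es ! i \<inter> es ! Suc i \<noteq> {}" using Cons.prems(5)[rule_format, of "Suc i"] by simp
      qed
    qed (use Cons.prems w \<open>es = e' # es'\<close> in auto)
    moreover have "(v1, w) \<in> R0 S" using Cons.prems w by (auto simp: R0_def)
    ultimately show ?thesis by (meson trancl_into_trancl2)
  qed
qed

lemma trancl_list:
  assumes "(u,v) \<in> (R0 S)\<^sup>+"
  shows "\<exists>es. es \<noteq> [] \<and> set es \<subseteq> S \<and> u \<in> hd es \<and> v \<in> last es \<and>
        (\<forall>i. Suc i < length es \<longrightarrow> es ! i \<inter> es ! Suc i \<noteq> {})"
  using assms
proof (induction rule: trancl_induct)
  case (base y)
  then obtain e where "e \<in> S" "u \<in> e" "y \<in> e" by (auto simp: R0_def)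
  then show ?case by (intro exI[of _ "[e]"]) auto
next
  case (step y z)
  then obtain es where es: "es \<noteq> []" "set es \<subseteq> S" "u \<in> hd es" "y \<in> last es"
     "\<forall>i. Suc i < length es \<longrightarrow> es ! i \<inter> es ! Suc i \<noteq> {}" by blast
  obtain e where e: "e \<in> S" "y \<in> e" "z \<in> e" using step(2) by (auto simp: R0_def)
  show ?case
  proof (intro exI[of _ "es @ [e]"] conjI allI impI)
    fix i assume i: "Suc i < length (es @ [e])"
    show "(es @ [e]) ! i \<inter> (es @ [e]) ! Suc i \<noteq> {}"
    proof (cases "Suc i < length es")
      case True
      then show ?thesis using es(5) by (simp add: nth_append)
    next
      case False
      then have "i = length es - 1" "Suc i = length es" using i by auto
      then show ?thesis using es(1,4) e(2) by (auto simp: nth_append last_conv_nth)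
    qed
  qed (use es e in auto)
qed

lemma hconn_iff: "hconnected V S \<longleftrightarrow> (\<forall>u\<in>V. \<forall>v\<in>V. (u,v) \<in> (R0 S)\<^sup>+)"
  unfolding hconnected_def using list_trancl trancl_list by metis


lemma count_const:
  assumes eq: "equiv V R" and fin: "finite V"
  shows "card {\<phi> \<in> V \<rightarrow>\<^sub>E B. \<forall>(u,v)\<in>R. \<phi> u = \<phi> v} = card B ^ card (V//R)"
proof -
  define F where "F = {\<phi> \<in> V \<rightarrow>\<^sub>E B. \<forall>(u,v)\<in>R. \<phi> u = \<phi> v}"
  define g where "g = (\<lambda>\<psi>::'a set \<Rightarrow> 'b. restrict (\<lambda>v. \<psi> (R``{v})) V)"
  have inj: "inj_on g (V//R \<rightarrow>\<^sub>E B)"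
  proof (rule inj_onI)
    fix \<psi>1 \<psi>2 assume p: "\<psi>1 \<in> V//R \<rightarrow>\<^sub>E B" "\<psi>2 \<in> V//R \<rightarrow>\<^sub>E B" "g \<psi>1 = g \<psi>2"
    show "\<psi>1 = \<psi>2"
    proof (rule PiE_ext[OF p(1,2)])
      fix X assume "X \<in> V//R"
      then obtain v where v: "v \<in> V" "X = R``{v}" by (auto elim: quotientE)
      have "g \<psi>1 v = g \<psi>2 v" using p(3) by simp
      then show "\<psi>1 X = \<psi>2 X" using v by (simp add: g_def)
    qed
  qed
  have img: "g ` (V//R \<rightarrow>\<^sub>E B) = F"
  proof
    show "g ` (V//R \<rightarrow>\<^sub>E B) \<subseteq> F"
    proof
      fix \<phi> assume "\<phi> \<in> g ` (V//R \<rightarrow>\<^sub>E B)"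
      then obtain \<psi> where \<psi>: "\<psi> \<in> V//R \<rightarrow>\<^sub>E B" "\<phi> = g \<psi>" by auto
      have "\<phi> \<in> V \<rightarrow>\<^sub>E B" using \<psi> by (auto simp: g_def intro: quotientI)
      moreover have "\<forall>(u,v)\<in>R. \<phi> u = \<phi> v"
      proof (clarify)
        fix u v assume "(u,v) \<in> R"
        moreover then have "u \<in> V" "v \<in> V" using eq by (auto simp: equiv_def refl_on_def)
        ultimately show "\<phi> u = \<phi> v" using \<psi>(2) equiv_class_eq[OF eq] by (simp add: g_def)
      qed
      ultimately show "\<phi> \<in> F" by (simp add: F_def)
    qed
  next
    show "F \<subseteq> g ` (V//R \<rightarrow>\<^sub>E B)"
    proof
      fix \<phi> assume \<phi>: "\<phi> \<in> F"
      define \<psi> where "\<psi> = restrict (\<lambda>X. \<phi> (SOME v. v \<in> X)) (V//R)"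
      have sub: "\<And>X. X \<in> V//R \<Longrightarrow> (SOME v. v \<in> X) \<in> X \<and> X \<subseteq> V"
        using in_quotient_imp_non_empty[OF eq] in_quotient_imp_subset[OF eq]
        by (metis ex_in_conv someI_ex)
      have "\<psi> \<in> V//R \<rightarrow>\<^sub>E B" using \<phi> sub by (auto simp: \<psi>_def F_def)
      moreover have "g \<psi> = \<phi>"
      proof
        fix v show "g \<psi> v = \<phi> v"
        proof (cases "v \<in> V")
          case True
          then have X: "R``{v} \<in> V//R" by (rule quotientI)
          then have "(SOME w. w \<in> R``{v}) \<in> R``{v}" using sub by blast
          then have "(v, SOME w. w \<in> R``{v}) \<in> R" by simp
          then show ?thesis using \<phi> True X by (auto simp: g_def \<psi>_def F_def)
        next
          case False
          then show ?thesis using \<phi> by (auto simp: g_def F_def PiE_def extensional_def)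
        qed
      qed
      ultimately show "\<phi> \<in> g ` (V//R \<rightarrow>\<^sub>E B)" by blast
    qed
  qed
  have "card F = card (V//R \<rightarrow>\<^sub>E B)" using card_image[OF inj] img by simp
  also have "\<dots> = card B ^ card (V//R)" using finite_quotient[OF fin] eq by (simp add: card_PiE equiv_def refl_on_def)
  finally show ?thesis by (simp add: F_def)
qed

lemma trmono: "r \<subseteq> s \<Longrightarrow> r\<^sup>+ \<subseteq> s\<^sup>+"
  using trancl_mono by blast

definition EqR :: "'a set \<Rightarrow> 'a set set \<Rightarrow> ('a \<times> 'a) set" where
  "EqR V S = (R0 S \<union> Id_on V)\<^sup>+"

definition cc :: "'a set \<Rightarrow> 'a set set \<Rightarrow> nat" where
  "cc V S = card (V // EqR V S)"

lemma EqR_equiv: assumes "\<forall>e\<in>S. e \<subseteq> V" shows "equiv V (EqR V S)"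
proof -
  have sub: "R0 S \<union> Id_on V \<subseteq> V \<times> V" using assms by (auto simp: R0_def)
  have "EqR V S \<subseteq> V \<times> V" unfolding EqR_def by (rule trancl_subset_Sigma[OF sub])
  moreover have "Id_on V \<subseteq> EqR V S" unfolding EqR_def by auto
  ultimately have "refl_on V (EqR V S)" "EqR V S \<subseteq> V \<times> V" by (auto simp: refl_on_def)
  moreover have "sym (R0 S \<union> Id_on V)" by (auto simp: sym_def R0_def)
  then have "sym (EqR V S)" unfolding EqR_def by (rule sym_trancl)
  moreover have "trans (EqR V S)" unfolding EqR_def by simp
  ultimately show ?thesis by (auto simp: equiv_def)
qed

lemma R0_EqR: "(R0 S)\<^sup>+ \<subseteq> EqR V S"
  unfolding EqR_def by (rule trmono) auto

lemma EqR_rtrancl: "EqR V S \<subseteq> (R0 S)\<^sup>*"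
proof -
  have "EqR V S \<subseteq> ((R0 S)\<^sup>=)\<^sup>+" unfolding EqR_def by (rule trmono) auto
  then show ?thesis by simp
qed

lemma const_iff:
  assumes "\<forall>e\<in>S. finite e"
  shows "(\<forall>e\<in>S. card (\<phi> ` e) \<le> 1) \<longleftrightarrow> (\<forall>(u,v)\<in>EqR V S. \<phi> u = \<phi> v)"
proof
  assume h: "\<forall>e\<in>S. card (\<phi> ` e) \<le> 1"
  show "\<forall>(u,v)\<in>EqR V S. \<phi> u = \<phi> v"
  proof clarify
    fix u v assume "(u,v) \<in> EqR V S"
    then show "\<phi> u = \<phi> v" unfolding EqR_def
    proof (induction rule: trancl_induct)
      case (base y)
      then show ?case
      proof
        assume "(u,y) \<in> R0 S"
        then obtain e where e: "e \<in> S" "u \<in> e" "y \<in> e" by (auto simp: R0_def)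
        have "card (\<phi> ` e) \<le> Suc 0" using h e by simp
        then have "\<forall>a1\<in>\<phi> ` e. \<forall>a2\<in>\<phi> ` e. a1 = a2" using card_le_Suc0_iff_eq[of "\<phi> ` e"] assms e by blast
        then show ?thesis using e by blast
      next
        assume "(u,y) \<in> Id_on V" then show ?thesis by blast
      qed
    next
      case (step y z)
      from step(2) show ?case
      proof
        assume "(y,z) \<in> R0 S"
        then obtain e where e: "e \<in> S" "y \<in> e" "z \<in> e" by (auto simp: R0_def)
        have "card (\<phi> ` e) \<le> Suc 0" using h e by simp
        then have "\<forall>a1\<in>\<phi> ` e. \<forall>a2\<in>\<phi> ` e. a1 = a2" using card_le_Suc0_iff_eq[of "\<phi> ` e"] assms e by blast
        then show ?thesis using e step(3) by (metis imageI)
      next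
        assume "(y,z) \<in> Id_on V" then show ?thesis using step(3) by blast
      qed
    qed
  qed
next
  assume h: "\<forall>(u,v)\<in>EqR V S. \<phi> u = \<phi> v"
  show "\<forall>e\<in>S. card (\<phi> ` e) \<le> 1"
  proof
    fix e assume e: "e \<in> S"
    have "\<forall>a1\<in>\<phi> ` e. \<forall>a2\<in>\<phi> ` e. a1 = a2"
    proof (intro ballI)
      fix a1 a2 assume a: "a1 \<in> \<phi> ` e" "a2 \<in> \<phi> ` e"
      then obtain u v where uv: "u \<in> e" "v \<in> e" "a1 = \<phi> u" "a2 = \<phi> v" by blast
      then have "(u,v) \<in> R0 S" using e by (auto simp: R0_def)
      then have "(u,v) \<in> (R0 S)\<^sup>+" by (rule r_into_trancl)
      then have uvR: "(u,v) \<in> EqR V S" using R0_EqR by (rule subsetD[rotated])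
      show "a1 = a2" using bspec[OF h uvR] uv by simp
    qed
    moreover have "finite (\<phi> ` e)" using assms e by simp
    ultimately have "card (\<phi> ` e) \<le> Suc 0" using card_le_Suc0_iff_eq[of "\<phi> ` e"] by blast
    then show "card (\<phi> ` e) \<le> 1" by simp
  qed
qed
lemma count_M:
  assumes "\<forall>e\<in>S. e \<subseteq> V" "finite V"
  shows "card ((V \<rightarrow>\<^sub>E {1..n}) \<inter> (\<Inter>e\<in>S. {\<phi>. card (\<phi> ` e) \<le> 1})) = n ^ cc V S"
proof -
  have fe: "\<forall>e\<in>S. finite e" using assms finite_subset by blast
  have "(V \<rightarrow>\<^sub>E {1..n}) \<inter> (\<Inter>e\<in>S. {\<phi>. card (\<phi> ` e) \<le> 1}) =
     {\<phi> \<in> V \<rightarrow>\<^sub>E {1..n}. \<forall>(u,v)\<in>EqR V S. \<phi> u = \<phi> v}"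
  proof (rule set_eqI)
    fix \<phi> :: "'a \<Rightarrow> nat"
    have "\<phi> \<in> (\<Inter>e\<in>S. {\<phi>. card (\<phi> ` e) \<le> 1}) \<longleftrightarrow> (\<forall>e\<in>S. card (\<phi> ` e) \<le> 1)" by simp
    then show "\<phi> \<in> (V \<rightarrow>\<^sub>E {1..n}) \<inter> (\<Inter>e\<in>S. {\<phi>. card (\<phi> ` e) \<le> 1}) \<longleftrightarrow>
       \<phi> \<in> {\<phi> \<in> V \<rightarrow>\<^sub>E {1..n}. \<forall>(u,v)\<in>EqR V S. \<phi> u = \<phi> v}"
      using const_iff[OF fe, of \<phi> V] by (simp only: Int_iff mem_Collect_eq)
  qed
  then show ?thesis using count_const[OF EqR_equiv[OF assms(1)] assms(2), of "{1..n}"]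
    by (simp add: cc_def)
qed

lemma cc_one_iff:
  assumes "\<forall>e\<in>S. e \<subseteq> V" "V \<noteq> {}"
  shows "cc V S = 1 \<longleftrightarrow> (\<forall>u\<in>V. \<forall>v\<in>V. (u,v) \<in> EqR V S)"
proof
  note eq = EqR_equiv[OF assms(1)]
  assume "cc V S = 1"
  then obtain X where X: "V // EqR V S = {X}" by (auto simp: cc_def card_1_singleton_iff)
  show "\<forall>u\<in>V. \<forall>v\<in>V. (u,v) \<in> EqR V S"
  proof (intro ballI)
    fix u v assume uv: "u \<in> V" "v \<in> V"
    have 1: "EqR V S `` {u} = X" using quotientI[OF uv(1), of "EqR V S"] X by simp
    have 2: "EqR V S `` {v} = X" using quotientI[OF uv(2), of "EqR V S"] X by simp
    have "(v,v) \<in> EqR V S" using eq uv(2) unfolding equiv_def refl_on_def by blast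
    then have "v \<in> EqR V S `` {v}" by simp
    then have "v \<in> EqR V S `` {u}" using 1 2 by simp
    then show "(u,v) \<in> EqR V S" by simp
  qed
next
  note eq = EqR_equiv[OF assms(1)]
  assume h: "\<forall>u\<in>V. \<forall>v\<in>V. (u,v) \<in> EqR V S"
  have ty: "EqR V S \<subseteq> V \<times> V" using eq by (rule equiv_type)
  have cls: "EqR V S `` {u} = V" if "u \<in> V" for u
    using h that ty by blast
  have "V // EqR V S = (\<Union>x\<in>V. {V})" unfolding quotient_def using cls by simp
  also have "\<dots> = {V}" using assms(2) by blast
  finally show "cc V S = 1" by (simp add: cc_def)
qed

lemma cc_pos:
  assumes "\<forall>e\<in>S. e \<subseteq> V" "V \<noteq> {}" "finite V"
  shows "cc V S \<ge> 1"
proof -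
  have "finite (V // EqR V S)" using EqR_equiv[OF assms(1)] assms(3) finite_quotient
    by (metis equiv_type)
  moreover have "V // EqR V S \<noteq> {}" using assms(2) by (auto simp: quotient_def)
  ultimately show ?thesis unfolding cc_def by (simp add: Suc_le_eq card_gt_0_iff)
qed

lemma X2_dvd_monom: "k \<ge> 2 \<Longrightarrow> [:0, 0, 1:] dvd (monom c k :: int poly)"
proof -
  assume k: "k \<ge> 2"
  have k2: "2 + (k - 2) = k" using k by simp
  have "monom c k = monom 1 2 * monom c (k - 2)" unfolding mult_monom k2 by simp
  moreover have "monom (1::int) 2 = [:0, 0, 1:]" by (simp add: numeral_2_eq_2 monom_Suc)
  ultimately show ?thesis by (metis dvd_triv_left)
qed

theorem theorem3:
  fixes V :: "'a set" and E :: "'a set set"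
  assumes "hypergraph V E"
    and "hconnected V E"
    and "bridges V E \<subset> E"
    and "hconnected V (bridges V E)"
  shows "[:0, 0, 1:] dvd chrom_poly V E"
proof -
  define B where "B = bridges V E"
  have finV: "finite V" and edges: "\<forall>e\<in>E. e \<subseteq> V \<and> e \<noteq> {}" using assms(1) by (auto simp: hypergraph_def)
  have finE: "finite E" using finV edges by (meson Pow_iff finite_Pow_iff finite_subset subsetI)
  obtain e0 where e0: "e0 \<in> E" "e0 \<notin> B" using assms(3) B_def by blast
  have Vne: "V \<noteq> {}" using e0 edges by blast
  have BE: "B \<subseteq> E" using assms(3) B_def by blast
  have sub: "\<And>S. S \<subseteq> E \<Longrightarrow> \<forall>e\<in>S. e \<subseteq> V" using edges by blast
  have one_if: "cc V S = 1" if S: "S \<subseteq> E" "B \<subseteq> S" for S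
  proof -
    have "\<forall>u\<in>V. \<forall>v\<in>V. (u,v) \<in> (R0 B)\<^sup>+" using assms(4) hconn_iff B_def by metis
    moreover have "(R0 B)\<^sup>+ \<subseteq> (R0 S)\<^sup>+" by (rule trmono) (use S in \<open>auto simp: R0_def\<close>)
    ultimately show ?thesis using cc_one_iff[OF sub[OF S(1)] Vne] R0_EqR by blast
  qed
  have only_if: "B \<subseteq> S" if S: "S \<subseteq> E" "cc V S = 1" for S
  proof
    fix b assume b: "b \<in> B"
    show "b \<in> S"
    proof (rule ccontr)
      assume nb: "b \<notin> S"
      have all: "\<forall>u\<in>V. \<forall>v\<in>V. (u,v) \<in> (R0 S)\<^sup>*"
        using cc_one_iff[OF sub[OF S(1)] Vne] S(2) EqR_rtrancl by blast
      have mono: "(R0 S)\<^sup>+ \<subseteq> (R0 (E - {b}))\<^sup>+" by (rule trmono) (use S nb in \<open>auto simp: R0_def\<close>)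
      have neq: "(u,v) \<in> (R0 (E - {b}))\<^sup>+" if "u \<in> V" "v \<in> V" "u \<noteq> v" for u v
        using all that mono by (meson rtranclD subsetD)
      have two: "\<exists>w\<in>V. w \<noteq> u" if "u \<in> V" for u
      proof (rule ccontr)
        assume "\<not> (\<exists>w\<in>V. w \<noteq> u)"
        then have Vu: "V = {u}" using that by blast
        have allu: "\<forall>e\<in>E. e = {u}"
        proof
          fix e assume "e \<in> E"
          then have "e \<subseteq> {u}" "e \<noteq> {}" using edges Vu by auto
          then show "e = {u}" using subset_singletonD by metis
        qed
        have "B = {}"
        proof (rule ccontr)
          assume "B \<noteq> {}"
          then obtain b where "b \<in> B" by blast
          then have "b \<in> E" using BE by blast
          then have "b = {u}" "e0 = {u}" using allu e0(1) by blast+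
          then show False using \<open>b \<in> B\<close> e0(2) by simp
        qed
        then show False using assms(4) B_def Vu hconn_iff[of V "{}"] by (simp add: R0_def)
      qed
      have "\<forall>u\<in>V. \<forall>v\<in>V. (u,v) \<in> (R0 (E - {b}))\<^sup>+"
      proof (intro ballI)
        fix u v assume uv: "u \<in> V" "v \<in> V"
        show "(u,v) \<in> (R0 (E - {b}))\<^sup>+"
        proof (cases "u = v")
          case True
          obtain w where w: "w \<in> V" "w \<noteq> u" using two uv by blast
          have 1: "(u,w) \<in> (R0 (E - {b}))\<^sup>+" using neq[OF uv(1) w(1)] w(2) by simp
          have 2: "(w,u) \<in> (R0 (E - {b}))\<^sup>+" using neq[OF w(1) uv(1)] w(2) by simp
          have "(u,u) \<in> (R0 (E - {b}))\<^sup>+" using 1 2 by (rule trancl_trans)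
          then show ?thesis using True by simp
        next
          case False
          then show ?thesis using neq[OF uv] by simp
        qed
      qed
      then have "hconnected V (E - {b})" by (simp only: hconn_iff)
      then show False using b B_def by (simp add: bridges_def)
    qed
  qed
  define p :: "int poly" where "p = (\<Sum>S\<in>Pow E. monom ((-1)^card S) (cc V S))"
  have pval: "poly p (int n) = int (num_colourings V E n)" for n
  proof -
    define U where "U = V \<rightarrow>\<^sub>E {1..n}"
    define A where "A = (\<lambda>e::'a set. {\<phi>::'a \<Rightarrow> nat. card (\<phi> ` e) \<le> 1})"
    have "weak_colourings V E n = U - (\<Union>e\<in>E. A e)"
      by (auto simp: weak_colourings_def U_def A_def)
    then have "int (num_colourings V E n) = (\<Sum>S\<in>Pow E. (-1)^card S * int (card (U \<inter> (\<Inter>i\<in>S. A i))))"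
      unfolding num_colourings_def using incl_excl[OF finE, of U A] finV by (simp add: U_def finite_PiE)
    also have "\<dots> = (\<Sum>S\<in>Pow E. (-1)^card S * int n ^ cc V S)"
    proof (rule sum.cong)
      fix S assume "S \<in> Pow E"
      then show "(-1)^card S * int (card (U \<inter> (\<Inter>i\<in>S. A i))) = (-1)^card S * int n ^ cc V S"
        using count_M[OF sub finV, of S n] by (simp add: U_def A_def)
    qed simp
    also have "\<dots> = poly p (int n)" by (simp add: p_def poly_sum poly_monom)
    finally show ?thesis by simp
  qed
  have cp: "chrom_poly V E = p"
    unfolding chrom_poly_def
  proof (rule the_equality)
    show "\<forall>n\<ge>1. poly p (int n) = int (num_colourings V E n)" using pval by simp
  next
    fix q :: "int poly" assume q: "\<forall>n\<ge>1. poly q (int n) = int (num_colourings V E n)"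
    show "q = p"
    proof (rule ccontr)
      assume "q \<noteq> p"
      then have "q - p \<noteq> 0" by simp
      then have fin: "finite {x. poly (q - p) x = 0}" by (rule poly_roots_finite)
      have "int ` {1..} \<subseteq> {x. poly (q - p) x = 0}"
      proof
        fix x assume "x \<in> int ` {1..}"
        then obtain n where n: "n \<ge> 1" "x = int n" by auto
        have "poly q (int n) = int (num_colourings V E n)" using q n(1) by blast
        then show "x \<in> {x. poly (q - p) x = 0}" using n(2) pval[of n] by simp
      qed
      moreover have "infinite (int ` {1::nat..})"
      proof
        assume "finite (int ` {1::nat..})"
        then have "finite {1::nat..}" by (rule finite_imageD) (simp add: inj_on_def)
        then show False by (simp add: infinite_Ici)
      qed
      ultimately show False using fin finite_subset by blast
    qed
  qed
  define E' where "E' = E - {e0}"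
  have EE: "E = insert e0 E'" "e0 \<notin> E'" using e0 by (auto simp: E'_def)
  have finE': "finite E'" using finE by (simp add: E'_def)
  have inj: "inj_on (insert e0) (Pow E')" using EE(2) by (auto simp: inj_on_def)
  have "p = (\<Sum>S\<in>Pow E'. monom ((-1)^card S) (cc V S)) + (\<Sum>S\<in>insert e0 ` Pow E'. monom ((-1)^card S) (cc V S))"
    unfolding p_def EE(1) Pow_insert
    by (rule sum.union_disjoint) (use finE' EE(2) in auto)
  also have "\<dots> = (\<Sum>S\<in>Pow E'. monom ((-1)^card S) (cc V S) + monom ((-1)^card (insert e0 S)) (cc V (insert e0 S)))"
    by (simp add: sum.reindex[OF inj] sum.distrib)
  finally have peq: "p = \<dots>" .
  have "[:0, 0, 1:] dvd p" unfolding peq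
  proof (rule dvd_sum)
    fix S assume S: "S \<in> Pow E'"
    have SE: "S \<subseteq> E" "insert e0 S \<subseteq> E" using S EE by auto
    have fS: "finite S" using S finE' finite_subset by auto
    have "e0 \<notin> S" using S EE(2) by blast
    then have cardi: "card (insert e0 S) = Suc (card S)" using card_insert_disjoint[OF fS] by simp
    show "[:0, 0, 1:] dvd (monom ((-1)^card S) (cc V S) :: int poly) + monom ((-1)^card (insert e0 S)) (cc V (insert e0 S))"
    proof (cases "B \<subseteq> S")
      case True
      have c1: "cc V S = 1" using one_if[OF SE(1) True] .
      have "B \<subseteq> insert e0 S" using True by blast
      then have c2: "cc V (insert e0 S) = 1" using one_if[OF SE(2)] by blast
      have z: "(-1::int)^card S + (-1)^card (insert e0 S) = 0" using cardi by simp
      show ?thesis unfolding c1 c2 add_monom using z by simp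
    next
      case False
      have nB: "\<not> B \<subseteq> insert e0 S" using e0(2) False by blast
      have "cc V S \<noteq> 1" using only_if[OF SE(1)] False by blast
      moreover have "cc V (insert e0 S) \<noteq> 1" using only_if[OF SE(2)] nB by blast
      moreover have "cc V S \<ge> 1" using cc_pos[OF sub[OF SE(1)] Vne finV] .
      moreover have "cc V (insert e0 S) \<ge> 1" using cc_pos[OF sub[OF SE(2)] Vne finV] .
      ultimately have "cc V S \<ge> 2" "cc V (insert e0 S) \<ge> 2" by auto
      then show ?thesis by (intro dvd_add X2_dvd_monom)
    qed
  qed
  then show ?thesis using cp by simp
qed

end
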